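(* Let $\beta\in(0,\tfrac12)$ and $\lambda_1(\beta)=\sup\mathcal{A}_\beta$. Then $\lambda_1(\beta)$ is a principal eigenvalue of $\Delta_\beta$. Moreover, there is an eigenfunction $u:\mathbb{T}_m\to\mathbb{R}$ associated with $\lambda_1(\beta)$ such that $u(\emptyset)=1$, $u>0$ on $\mathbb{T}_m$, $\Delta_\beta u+\lambda_1(\beta)u=0$ on $\mathbb{T}_m$, $\lim_{x\to y}u(x)=0$ for all $y\in\partial\mathbb{T}_m$, and $u$ is constant on each level and decreasing with respect to the level, i.e. $u(x)=f(|x|)$ for a decreasing $f:\mathbb{N}_0\to\mathbb{R}$.
   Context: Tree: for an integer $m\ge2$, the regular $m$-branching tree $\mathbb{T}_m$ has as vertices the root $\emptyset$ and all finite sequences $(\emptyset,a_1,\dots,a_k)$, $k\in\mathbb{N}$, $a_i\in\{0,\dots,m-1\}$. The level of $x=(\emptyset,a_1,\dots,a_k)$ is $|x|=k$ ($|\emptyset|=0$). The successors of $x$ are $(x,i)$, $i\in\{0,\dots,m-1\}$; for $x\ne\emptyset$, $\hat x$ denotes its unique immediate predecessor. A branch is an infinite sequence $(x_n)_{n\ge0}$ with $x_0=\emptyset$ and $x_{n+1}$ a successor of $x_n$; $\partial\mathbb{T}_m$ is the set of branches. For $y=(x_n)\in\partial\mathbb{T}_m$, $\lim_{x\to y}u(x)=L$ means $\lim_{n\to\infty}u(x_n)=L$. Operator: for $\beta\in[0,1)$ let $p_\beta=1$ if $\beta=0$ and $p_\beta=\beta/(1-\beta)$ if $\beta\in(0,1)$.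 For $u:\mathbb{T}_m\to\mathbb{R}$, $\Delta_\beta u(\emptyset)=\frac1m\sum_{i=0}^{m-1}u(\emptyset,i)-u(\emptyset)$ and, for $x\ne\emptyset$, $\Delta_\beta u(x)=\big(\beta u(\hat x)+\frac{1-\beta}{m}\sum_{i=0}^{m-1}u(x,i)-u(x)\big)p_\beta^{-|x|}$. Eigenvalues: $\lambda\in\mathbb{R}$ is an eigenvalue of $\Delta_\beta$ if there is a bounded $u:\mathbb{T}_m\to\mathbb{R}$, $u\not\equiv0$, with $-\Delta_\beta u=\lambda u$ on $\mathbb{T}_m$ and $\lim_{x\to y}u(x)=0$ for every $y\in\partial\mathbb{T}_m$ ($u$ is an eigenfunction). An eigenvalue $\lambda>0$ is principal if it has a non-negative eigenfunction. The set $\mathcal{A}_\beta$: $\mathcal{A}_\beta=\{\lambda>0:\exists v:\mathbb{T}_m\to\mathbb{R}\text{ and constants }0<c<C\text{ with } c<v<C \text{ on }\mathbb{T}_m \text{ and } \Delta_\beta v+\lambda v\le0 \text{ on }\mathbb{T}_m\}$, and $\lambda_1(\beta)=\sup\mathcal{A}_\beta$. *)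

theory Defs
  imports "HOL-Analysis.Analysis"
begin

text \<open>Vertices of the regular m-branching tree: finite lists over {0..m-1};
  the root is the empty list, successors of x are x @ [i], the predecessor
  of a non-root x is butlast x, and the level of x is length x.\<close>

definition tree :: "nat \<Rightarrow> nat list set" where
  "tree m = {x. \<forall>a\<in>set x. a < m}"

definition branches :: "nat \<Rightarrow> (nat \<Rightarrow> nat list) set" where
  "branches m = {b. b 0 = [] \<and> (\<forall>n. \<exists>i<m. b (Suc n) = b n @ [i])}"

definition p_beta :: "real \<Rightarrow> real" where
  "p_beta \<beta> = (if \<beta> = 0 then 1 else \<beta> / (1 - \<beta>))"

definition lap :: "nat \<Rightarrow> real \<Rightarrow> (nat list \<Rightarrow> real) \<Rightarrow> nat list \<Rightarrow> real" where
  "lap m \<beta> u x =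
    (if x = [] then (1 / real m) * (\<Sum>i<m. u [i]) - u []
     else (\<beta> * u (butlast x) + ((1 - \<beta>) / real m) * (\<Sum>i<m. u (x @ [i])) - u x)
          / (p_beta \<beta>) ^ length x)"

definition eigenfunction :: "nat \<Rightarrow> real \<Rightarrow> real \<Rightarrow> (nat list \<Rightarrow> real) \<Rightarrow> bool" where
  "eigenfunction m \<beta> lam u \<longleftrightarrow>
     (\<exists>B. \<forall>x\<in>tree m. \<bar>u x\<bar> \<le> B) \<and>
     (\<exists>x\<in>tree m. u x \<noteq> 0) \<and>
     (\<forall>x\<in>tree m. - lap m \<beta> u x = lam * u x) \<and>
     (\<forall>b\<in>branches m. (\<lambda>n. u (b n)) \<longlonglongrightarrow> 0)"

definition eigenvalue :: "nat \<Rightarrow> real \<Rightarrow> real \<Rightarrow> bool" where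
  "eigenvalue m \<beta> lam \<longleftrightarrow> (\<exists>u. eigenfunction m \<beta> lam u)"

definition principal_eigenvalue :: "nat \<Rightarrow> real \<Rightarrow> real \<Rightarrow> bool" where
  "principal_eigenvalue m \<beta> lam \<longleftrightarrow>
     lam > 0 \<and> (\<exists>u. eigenfunction m \<beta> lam u \<and> (\<forall>x\<in>tree m. u x \<ge> 0))"

definition A_set :: "nat \<Rightarrow> real \<Rightarrow> real set" where
  "A_set m \<beta> = {lam. lam > 0 \<and> (\<exists>v c C. 0 < c \<and> c < C \<and>
       (\<forall>x\<in>tree m. c < v x \<and> v x < C) \<and>
       (\<forall>x\<in>tree m. lap m \<beta> v x + lam * v x \<le> 0))}"

definition lambda1 :: "nat \<Rightarrow> real \<Rightarrow> real" where
  "lambda1 m \<beta> = Sup (A_set m \<beta>)"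

end

theory Submission imports Defs begin

fun sol :: "real \<Rightarrow> real \<Rightarrow> real \<Rightarrow> nat \<Rightarrow> real" where
  "sol b p l 0 = 1"
| "sol b p l (Suc 0) = 1 - l"
| "sol b p l (Suc (Suc n)) = ((1 - l * p ^ Suc n) * sol b p l (Suc n) - b * sol b p l n) / (1 - b)"

lemma sol_rec: "b \<noteq> 1 \<Longrightarrow> (1 - b) * sol b p l (Suc (Suc n)) = (1 - l * p ^ Suc n) * sol b p l (Suc n) - b * sol b p l n"
  by simp

lemma sol_cont_aux: "b \<noteq> 1 \<Longrightarrow> isCont (\<lambda>l. sol b p l n) z \<and> isCont (\<lambda>l. sol b p l (Suc n)) z"
proof (induction n)
  case 0 then show ?case by (auto intro!: continuous_intros)
next
  case (Suc n) then show ?case by (auto intro!: continuous_intros)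
qed

lemma div_ineq: assumes "P > 0" "N / P + a \<le> (0::real)" shows "N + a * P \<le> 0"
proof -
  have "N / P \<le> - a" using assms by linarith
  then have "N \<le> - a * P" using assms(1) by (simp add: pos_divide_le_eq)
  then show ?thesis by linarith
qed

definition lev :: "nat \<Rightarrow> nat \<Rightarrow> nat list set" where
  "lev m k = {xs. set xs \<subseteq> {..<m} \<and> length xs = k}"

lemma lev_tree: "x \<in> lev m k \<Longrightarrow> x \<in> tree m"
  by (auto simp: lev_def tree_def)

lemma lev_fin: "finite (lev m k)"
  unfolding lev_def by (rule finite_lists_length_eq) simp

lemma lev_ne: "m > 0 \<Longrightarrow> replicate k 0 \<in> lev m k"
  by (auto simp: lev_def)

lemma lev_0: "lev m 0 = {[]}" by (auto simp: lev_def)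

lemma lev_Suc: "lev m (Suc k) = (\<lambda>(x,i). x @ [i]) ` (lev m k \<times> {..<m})"
proof
  show "(\<lambda>(x,i). x @ [i]) ` (lev m k \<times> {..<m}) \<subseteq> lev m (Suc k)"
    by (auto simp: lev_def)
next
  show "lev m (Suc k) \<subseteq> (\<lambda>(x,i). x @ [i]) ` (lev m k \<times> {..<m})"
  proof
    fix y assume y: "y \<in> lev m (Suc k)"
    then have ne: "y \<noteq> []" by (auto simp: lev_def)
    have e: "y = butlast y @ [last y]" using ne by simp
    have "butlast y \<in> lev m k" using y by (auto simp: lev_def dest: in_set_butlastD)
    moreover have "last y < m" using y ne last_in_set by (auto simp: lev_def)
    ultimately show "y \<in> (\<lambda>(x,i). x @ [i]) ` (lev m k \<times> {..<m})"
      using e by (intro image_eqI[of _ _ "(butlast y, last y)"]) auto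
  qed
qed

lemma sum_lev_Suc: "(\<Sum>y\<in>lev m (Suc k). g y) = (\<Sum>x\<in>lev m k. \<Sum>i<m. g (x @ [i]))"
proof -
  have inj: "inj_on (\<lambda>(x,i). x @ [i]) (lev m k \<times> {..<m})"
    by (auto simp: inj_on_def)
  have "(\<Sum>y\<in>lev m (Suc k). g y) = (\<Sum>(x,i)\<in>lev m k \<times> {..<m}. g (x @ [i]))"
    unfolding lev_Suc by (subst sum.reindex[OF inj]) (simp add: case_prod_beta)
  also have "\<dots> = (\<Sum>x\<in>lev m k. \<Sum>i<m. g (x @ [i]))"
    by (simp add: sum.cartesian_product)
  finally show ?thesis .
qed

lemma lap_shift: "m > 0 \<Longrightarrow> lap m \<beta> (\<lambda>x. v x + d) x = lap m \<beta> v x"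
  by (simp add: lap_def sum.distrib field_simps)

lemma lap_radial: "m > 0 \<Longrightarrow> lap m \<beta> (\<lambda>x. g (length x)) x =
   (if x = [] then g 1 - g 0 else (\<beta> * g (length x - 1) + (1 - \<beta>) * g (Suc (length x)) - g (length x)) / p_beta \<beta> ^ length x)"
  by (simp add: lap_def)

context
  fixes m :: nat and \<beta> :: real
  assumes m2: "m \<ge> 2" and b0: "0 < \<beta>" and b1: "\<beta> < 1 / 2"
begin

lemma mpos: "m > 0" using m2 by simp

lemma p_eq: "p_beta \<beta> = \<beta> / (1 - \<beta>)" using b0 by (simp add: p_beta_def)
lemma p_pos: "0 < p_beta \<beta>" using b0 b1 by (simp add: p_eq)
lemma p_lt1: "p_beta \<beta> < 1" using b0 b1 by (simp add: p_eq field_simps)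
lemma b_eq: "\<beta> = p_beta \<beta> * (1 - \<beta>)" using b1 by (simp add: p_eq)

lemma A_setI: "0 < l \<Longrightarrow> 0 < c \<Longrightarrow> c < C \<Longrightarrow> (\<forall>x\<in>tree m. c < v x \<and> v x < C) \<Longrightarrow>
  (\<forall>x\<in>tree m. lap m \<beta> v x + l * v x \<le> 0) \<Longrightarrow> l \<in> A_set m \<beta>"
  unfolding A_set_def by blast

lemma A_nonempty: "\<exists>l. l \<in> A_set m \<beta>"
proof -
  define p where "p = p_beta \<beta>"
  define r where "r = (1 + p) / 2"
  have pp: "0 < p" "p < 1" using p_pos p_lt1 by (auto simp: p_def)
  have r: "p < r" "r < 1" "0 < r" using pp by (auto simp: r_def)
  define K where "K = (1 - \<beta>) * (r - p) * (1 - r)"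
  have K: "0 < K" using r b1 by (simp add: K_def)
  define \<kappa> where "\<kappa> = min (1 - r) K"
  have kp: "0 < \<kappa>" using K r by (simp add: \<kappa>_def)
  define v where "v = (\<lambda>x::nat list. r ^ length x + 1)"
  have lh: "lap m \<beta> (\<lambda>x. r ^ length x) x \<le> - \<kappa>" for x
  proof (cases x)
    case Nil
    then show ?thesis using lap_radial[OF mpos, of \<beta> "\<lambda>k. r ^ k" x] by (simp add: \<kappa>_def)
  next
    case (Cons a xs)
    define j where "j = length xs"
    have lx: "length x = Suc j" using Cons j_def by simp
    have e1: "(1 - \<beta>) * p = \<beta>" using b_eq by (simp add: p_def mult.commute)
    have q0: "\<beta> + (1-\<beta>)*r*r - r + K = (\<beta> - (1-\<beta>)*p) * (1 - r)"
      unfolding K_def by (simp add: algebra_simps)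
    have q: "\<beta> + (1-\<beta>)*r*r - r = - K" using q0 e1 by simp
    have id: "\<beta> * r ^ j + (1 - \<beta>) * r ^ Suc (Suc j) - r ^ Suc j = - K * r ^ j"
    proof -
      have "\<beta> * r ^ j + (1 - \<beta>) * r ^ Suc (Suc j) - r ^ Suc j = (\<beta> + (1-\<beta>)*r*r - r) * r ^ j"
        by (simp add: algebra_simps)
      then show ?thesis using q by simp
    qed
    have "p ^ Suc j \<le> p ^ j" using pp by (simp add: power_le_imp_le_exp mult_le_cancel_right1 power_Suc)
    also have "\<dots> \<le> r ^ j" using pp r by (intro power_mono) auto
    finally have pj: "p ^ Suc j \<le> r ^ j" .
    have "lap m \<beta> (\<lambda>x. r ^ length x) x = - K * r ^ j / p ^ Suc j"
      using lap_radial[OF mpos, of \<beta> "\<lambda>k. r ^ k" x] Cons lx id by (simp add: p_def)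
    also have "\<dots> \<le> - K"
      using pj K pp by (simp add: field_simps)
    finally show ?thesis by (simp add: \<kappa>_def)
  qed
  have P: "0 < (1/2::real) \<and> 1/2 < (3::real) \<and> (\<forall>x::nat list\<in>tree m. 1 / 2 < v x \<and> v x < 3) \<and> (\<forall>x\<in>tree m. lap m \<beta> v x + \<kappa> / 2 * v x \<le> 0)"
  proof (intro conjI)
    show "\<forall>x\<in>tree m. 1 / 2 < v x \<and> v x < 3"
      using r by (auto simp: v_def intro: order.strict_trans1[OF power_le_one] add_pos_nonneg)
    show "\<forall>x\<in>tree m. lap m \<beta> v x + \<kappa> / 2 * v x \<le> 0"
    proof
      fix x :: "nat list"
      have "r ^ length x \<le> 1" using r by (simp add: power_le_one)
      then have "v x \<le> 2" by (simp add: v_def)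
      moreover have "lap m \<beta> v x = lap m \<beta> (\<lambda>x. r ^ length x) x"
        unfolding v_def by (rule lap_shift[OF mpos])
      moreover have "\<kappa> / 2 * v x \<le> \<kappa> / 2 * 2" using kp \<open>v x \<le> 2\<close> by (intro mult_left_mono) auto
      ultimately show "lap m \<beta> v x + \<kappa> / 2 * v x \<le> 0" using lh[of x] kp
        by linarith
    qed
  qed auto
  have "\<kappa> / 2 \<in> A_set m \<beta>" using P kp by (intro A_setI[of _ "1/2" 3 v]) auto
  then show ?thesis by blast
qed

lemma A_lt1: "l \<in> A_set m \<beta> \<Longrightarrow> l < 1"
proof -
  assume "l \<in> A_set m \<beta>"
  then obtain v c C where l: "l > 0" "0 < c" "\<forall>x\<in>tree m. c < v x \<and> v x < C"
     "\<forall>x\<in>tree m. lap m \<beta> v x + l * v x \<le> 0" by (auto simp: A_set_def)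
  have t: "[] \<in> tree m" "\<And>i. i < m \<Longrightarrow> [i] \<in> tree m" by (auto simp: tree_def)
  have "(\<Sum>i<m. v [i]) > 0" using mpos l(2,3) t by (intro sum_pos) force+
  then have "(1 / real m) * (\<Sum>i<m. v [i]) > 0" using mpos by simp
  moreover have "lap m \<beta> v [] + l * v [] \<le> 0" using l(4) t(1) by blast
  then have "(1 / real m) * (\<Sum>i<m. v [i]) - v [] + l * v [] \<le> 0"
    by (simp add: lap_def)
  ultimately have "l * v [] < 1 * v []" by simp
  moreover have "v [] > 0" using l(2,3) t(1) by force
  ultimately show "l < 1" by simp
qed

lemma A_open: "l \<in> A_set m \<beta> \<Longrightarrow> \<exists>l'>l. l' \<in> A_set m \<beta>"
proof -
  assume "l \<in> A_set m \<beta>"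
  then obtain v c C where l: "l > 0" "0 < c" "c < C" "\<forall>x\<in>tree m. c < v x \<and> v x < C"
     "\<forall>x\<in>tree m. lap m \<beta> v x + l * v x \<le> 0" by (auto simp: A_set_def)
  define w where "w = (\<lambda>x. v x + (- c / 2))"
  define e where "e = l * c / (2 * C)"
  have e: "e > 0" using l by (simp add: e_def)
  have P: "0 < c/2 \<and> c/2 < C \<and> (\<forall>x\<in>tree m. c / 2 < w x \<and> w x < C) \<and> (\<forall>x\<in>tree m. lap m \<beta> w x + (l + e) * w x \<le> 0)"
  proof (intro conjI)
    show "\<forall>x\<in>tree m. c / 2 < w x \<and> w x < C" using l by (force simp: w_def)
    show "\<forall>x\<in>tree m. lap m \<beta> w x + (l + e) * w x \<le> 0"
    proof
      fix x assume x: "x \<in> tree m"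
      have lw: "lap m \<beta> w x = lap m \<beta> v x" unfolding w_def by (rule lap_shift[OF mpos])
      have wC: "w x \<le> C" using l x by (force simp: w_def)
      have "e * w x \<le> e * C" using wC e by simp
      also have "\<dots> = l * c / 2" using l by (simp add: e_def)
      finally have "e * w x \<le> l * c / 2" .
      moreover have "lap m \<beta> v x + l * v x \<le> 0" using l x by blast
      ultimately show "lap m \<beta> w x + (l + e) * w x \<le> 0"
        unfolding lw by (simp add: w_def algebra_simps)
    qed
  qed (use l in auto)
  have "l + e \<in> A_set m \<beta>" using P e l by (intro A_setI[of _ "c/2" C w]) auto
  then show ?thesis using e by (intro exI[of _ "l + e"]) auto
qed

lemma A_down: "l \<in> A_set m \<beta> \<Longrightarrow> 0 < l' \<Longrightarrow> l' \<le> l \<Longrightarrow> l' \<in> A_set m \<beta>"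
proof -
  assume a: "l \<in> A_set m \<beta>" "0 < l'" "l' \<le> l"
  then obtain v c C where l: "l > 0" "0 < c" "c < C" "\<forall>x\<in>tree m. c < v x \<and> v x < C"
     "\<forall>x\<in>tree m. lap m \<beta> v x + l * v x \<le> 0" by (auto simp: A_set_def)
  have "\<forall>x\<in>tree m. lap m \<beta> v x + l' * v x \<le> 0"
  proof
    fix x assume x: "x \<in> tree m"
    have "l' * v x \<le> l * v x" using a l x by (intro mult_right_mono) force+
    then show "lap m \<beta> v x + l' * v x \<le> 0" using l x by force
  qed
  then show ?thesis using a l unfolding A_set_def by blast
qed


lemma avg:
  assumes "l \<in> A_set m \<beta>"
  shows "\<exists>V. (\<forall>k. V k > 0) \<and> V 1 \<le> (1 - l) * V 0 \<and>
     (\<forall>k. \<beta> * V k + (1 - \<beta>) * V (Suc (Suc k)) \<le> (1 - l * p_beta \<beta> ^ Suc k) * V (Suc k))"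
proof -
  obtain v c C where l: "l > 0" "0 < c" "\<forall>x\<in>tree m. c < v x \<and> v x < C"
     "\<forall>x\<in>tree m. lap m \<beta> v x + l * v x \<le> 0" using assms by (auto simp: A_set_def)
  define p where "p = p_beta \<beta>"
  have pp: "0 < p" using p_pos by (simp add: p_def)
  define M where "M = real m"
  have M: "M > 0" using mpos by (simp add: M_def)
  define S where "S k = (\<Sum>x\<in>lev m k. v x)" for k
  define V where "V k = S k / M ^ k" for k
  have vpos: "x \<in> lev m k \<Longrightarrow> v x > 0" for x k using l(2,3) lev_tree by force
  have Spos: "S k > 0" for k
  proof -
    have ne: "lev m k \<noteq> {}" using lev_ne[OF mpos, of k] by blast
    show ?thesis unfolding S_def using lev_fin ne vpos by (intro sum_pos) auto
  qed
  have Vpos: "V k > 0" for k using Spos M by (simp add: V_def)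
  have S0: "S 0 = v []" by (simp add: S_def lev_0)
  have S1: "S (Suc 0) = (\<Sum>i<m. v [i])" using sum_lev_Suc[where m=m and k=0 and g=v] by (simp add: S_def lev_0)
  have "lap m \<beta> v [] + l * v [] \<le> 0" using l(4) by (auto simp: tree_def)
  then have "S 1 / M - S 0 + l * S 0 \<le> 0" by (simp add: lap_def S0 S1 M_def)
  then have root: "V 1 \<le> (1 - l) * V 0" by (simp add: V_def algebra_simps)
  have step: "\<beta> * V k + (1 - \<beta>) * V (Suc (Suc k)) \<le> (1 - l * p ^ Suc k) * V (Suc k)" for k
  proof -
    have pt: "\<beta> * v (butlast x) + ((1-\<beta>)/M) * (\<Sum>i<m. v (x@[i])) - v x + l * p ^ Suc k * v x \<le> 0"
      if x: "x \<in> lev m (Suc k)" for x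
    proof -
      have ne: "x \<noteq> []" and lx: "length x = Suc k" using x by (auto simp: lev_def)
      have "lap m \<beta> v x + l * v x \<le> 0" using l(4) lev_tree[OF x] by blast
      then have "(\<beta> * v (butlast x) + ((1-\<beta>)/M) * (\<Sum>i<m. v (x@[i])) - v x) / p ^ Suc k + l * v x \<le> 0"
        using ne lx by (simp add: lap_def M_def p_def)
      from div_ineq[OF _ this] have "(\<beta> * v (butlast x) + ((1-\<beta>)/M) * (\<Sum>i<m. v (x@[i])) - v x) + l * v x * p ^ Suc k \<le> 0"
        using pp by simp
      then show ?thesis by (simp add: algebra_simps)
    qed
    have "(\<Sum>x\<in>lev m (Suc k). \<beta> * v (butlast x) + ((1-\<beta>)/M) * (\<Sum>i<m. v (x@[i])) - v x + l * p ^ Suc k * v x) \<le> 0"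
      using pt by (intro sum_nonpos) auto
    moreover have "(\<Sum>x\<in>lev m (Suc k). \<beta> * v (butlast x) + ((1-\<beta>)/M) * (\<Sum>i<m. v (x@[i])) - v x + l * p ^ Suc k * v x)
       = \<beta> * (\<Sum>x\<in>lev m (Suc k). v (butlast x)) + ((1-\<beta>)/M) * (\<Sum>x\<in>lev m (Suc k). \<Sum>i<m. v (x@[i]))
         - S (Suc k) + l * p ^ Suc k * S (Suc k)"
      by (simp add: S_def sum.distrib sum_subtractf sum_distrib_left)
    moreover have "(\<Sum>x\<in>lev m (Suc k). v (butlast x)) = M * S k"
      using sum_lev_Suc[where m=m and k=k and g="\<lambda>x. v (butlast x)"] by (simp add: S_def M_def sum_distrib_left)
    moreover have "(\<Sum>x\<in>lev m (Suc k). \<Sum>i<m. v (x@[i])) = S (Suc (Suc k))"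
      using sum_lev_Suc[where m=m and k="Suc k" and g=v] by (simp add: S_def)
    ultimately have E: "\<beta> * (M * S k) + ((1-\<beta>)/M) * S (Suc (Suc k)) - S (Suc k) + l * p ^ Suc k * S (Suc k) \<le> 0"
      by simp
    have "M ^ Suc k * (\<beta> * V k + (1 - \<beta>) * V (Suc (Suc k)) - (1 - l * p ^ Suc k) * V (Suc k))
       = \<beta> * (M * S k) + ((1-\<beta>)/M) * S (Suc (Suc k)) - S (Suc k) + l * p ^ Suc k * S (Suc k)"
      using M by (simp add: V_def field_simps)
    then have "M ^ Suc k * (\<beta> * V k + (1 - \<beta>) * V (Suc (Suc k)) - (1 - l * p ^ Suc k) * V (Suc k)) \<le> 0"
      using E by simp
    then have "\<beta> * V k + (1 - \<beta>) * V (Suc (Suc k)) - (1 - l * p ^ Suc k) * V (Suc k) \<le> 0"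
    proof -
      have "0 < M ^ k" "0 < M" using M by simp_all
      with \<open>M ^ Suc k * _ \<le> 0\<close> show ?thesis by (simp add: mult_le_0_iff)
    qed
    then show ?thesis by simp
  qed
  show ?thesis using Vpos root step unfolding p_def by blast
qed

lemma compare:
  assumes Vp: "\<forall>k. V k > 0" and root: "V 1 \<le> (1 - l) * V 0"
    and st: "\<forall>k. \<beta> * V k + (1 - \<beta>) * V (Suc (Suc k)) \<le> (1 - l * p ^ Suc k) * V (Suc k)"
  shows "sol \<beta> p l n > 0 \<and> V n * sol \<beta> p l (Suc n) - sol \<beta> p l n * V (Suc n) \<ge> 0"
proof (induction n)
  case 0
  then show ?case using root by (simp add: algebra_simps)
next
  case (Suc n)
  define f0 where "f0 = sol \<beta> p l n"
  define f1 where "f1 = sol \<beta> p l (Suc n)"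
  define f2 where "f2 = sol \<beta> p l (Suc (Suc n))"
  have IH: "f0 > 0" "V n * f1 - f0 * V (Suc n) \<ge> 0" using Suc by (auto simp: f0_def f1_def)
  have "V n * f1 \<ge> f0 * V (Suc n)" using IH by simp
  moreover have "f0 * V (Suc n) > 0" using IH Vp by simp
  ultimately have "V n * f1 > 0" by linarith
  then have f1p: "f1 > 0" using Vp[rule_format, of n] by (simp add: zero_less_mult_iff)
  have r2: "(1 - \<beta>) * f2 = (1 - l * p ^ Suc n) * f1 - \<beta> * f0"
    unfolding f0_def f1_def f2_def using b1 by (intro sol_rec) simp
  define q where "q = l * p ^ Suc n"
  have A: "f1 * ((1 - \<beta>) * V (Suc (Suc n))) \<le> f1 * ((1 - q) * V (Suc n) - \<beta> * V n)"
    using st f1p unfolding q_def by (intro mult_left_mono) (auto simp: algebra_simps)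
  have eq1: "(1 - \<beta>) * (V (Suc n) * f2 - f1 * V (Suc (Suc n))) = V (Suc n) * ((1 - \<beta>) * f2) - f1 * ((1 - \<beta>) * V (Suc (Suc n)))"
    by (simp add: algebra_simps)
  have eq2: "V (Suc n) * ((1 - q) * f1 - \<beta> * f0) - f1 * ((1 - q) * V (Suc n) - \<beta> * V n) = \<beta> * (V n * f1 - f0 * V (Suc n))"
    by (simp add: algebra_simps)
  have "(1 - \<beta>) * (V (Suc n) * f2 - f1 * V (Suc (Suc n))) \<ge> \<beta> * (V n * f1 - f0 * V (Suc n))"
  proof -
    have "V (Suc n) * ((1 - \<beta>) * f2) = V (Suc n) * ((1 - q) * f1 - \<beta> * f0)" using r2 by (simp add: q_def)
    then show ?thesis using eq1 eq2 A by linarith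
  qed
  moreover have "\<beta> * (V n * f1 - f0 * V (Suc n)) \<ge> 0" using IH b0 by simp
  ultimately have "(1 - \<beta>) * (V (Suc n) * f2 - f1 * V (Suc (Suc n))) \<ge> 0" by linarith
  then have "V (Suc n) * f2 - f1 * V (Suc (Suc n)) \<ge> 0" using b1 by (simp add: zero_le_mult_iff)
  then show ?case using f1p by (simp add: f1_def f2_def)
qed


lemma sol_diff:
  "(1 - \<beta>) * (sol \<beta> (p_beta \<beta>) l (Suc n) - sol \<beta> (p_beta \<beta>) l n)
     = - l * p_beta \<beta> ^ n * ((1 - \<beta>) + (\<Sum>k<n. sol \<beta> (p_beta \<beta>) l (Suc k)))"
proof (induction n)
  case 0
  then show ?case by (simp add: algebra_simps)
next
  case (Suc n)
  define p where "p = p_beta \<beta>"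
  define f0 where "f0 = sol \<beta> p l n"
  define f1 where "f1 = sol \<beta> p l (Suc n)"
  define f2 where "f2 = sol \<beta> p l (Suc (Suc n))"
  define T where "T = (1 - \<beta>) + (\<Sum>k<n. sol \<beta> p l (Suc k))"
  have IH: "(1 - \<beta>) * (f1 - f0) = - l * p ^ n * T" using Suc by (simp add: f0_def f1_def T_def p_def)
  have r2: "(1 - \<beta>) * f2 = (1 - l * p ^ Suc n) * f1 - \<beta> * f0"
    unfolding f0_def f1_def f2_def using b1 by (intro sol_rec) simp
  have e1: "(1 - \<beta>) * p = \<beta>" using b_eq by (simp add: p_def mult.commute)
  have a: "(1 - \<beta>) * (f2 - f1) = (1 - \<beta>) * f2 - (1 - \<beta>) * f1" by (simp add: algebra_simps)
  have b1': "\<beta> * (f1 - f0) = ((1 - \<beta>) * p) * (f1 - f0)" using e1 by simp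
  have b: "\<beta> * (f1 - f0) = p * ((1 - \<beta>) * (f1 - f0))" unfolding b1' by (simp only: mult_ac)
  have c: "(1 - l * p ^ Suc n) * f1 - \<beta> * f0 - (1 - \<beta>) * f1 = \<beta> * (f1 - f0) - l * p ^ Suc n * f1"
    by (simp add: algebra_simps)
  have "(1 - \<beta>) * (f2 - f1) = (1 - \<beta>) * f2 - (1 - \<beta>) * f1" by (simp add: algebra_simps)
  also have "\<dots> = (1 - l * p ^ Suc n) * f1 - \<beta> * f0 - (1 - \<beta>) * f1" by (simp only: r2)
  also have "\<dots> = \<beta> * (f1 - f0) - l * p ^ Suc n * f1" by (rule c)
  also have "\<dots> = p * ((1 - \<beta>) * (f1 - f0)) - l * p ^ Suc n * f1" by (simp only: b)
  also have "\<dots> = p * (- l * p ^ n * T) - l * p ^ Suc n * f1" by (simp only: IH)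
  also have "\<dots> = - l * p ^ Suc n * (T + f1)" by (simp add: algebra_simps)
  finally show ?case by (simp add: f1_def f2_def T_def p_def algebra_simps del: sol.simps)
qed

lemma radial_eq:
  "lap m \<beta> (\<lambda>x. sol \<beta> (p_beta \<beta>) l (length x)) x + l * sol \<beta> (p_beta \<beta>) l (length x) = 0"
proof (cases x)
  case Nil
  then show ?thesis using lap_radial[OF mpos, of \<beta> "\<lambda>k. sol \<beta> (p_beta \<beta>) l k" x] by simp
next
  case (Cons a xs)
  define p where "p = p_beta \<beta>"
  define j where "j = length xs"
  have lx: "length x = Suc j" using Cons j_def by simp
  have r2: "(1 - \<beta>) * sol \<beta> p l (Suc (Suc j)) = (1 - l * p ^ Suc j) * sol \<beta> p l (Suc j) - \<beta> * sol \<beta> p l j"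
    using b1 by (intro sol_rec) simp
  have num: "\<beta> * sol \<beta> p l j + (1 - \<beta>) * sol \<beta> p l (Suc (Suc j)) - sol \<beta> p l (Suc j) = - l * sol \<beta> p l (Suc j) * p ^ Suc j"
    using r2 by (simp add: algebra_simps)
  have pp: "p ^ Suc j > 0" using p_pos by (simp add: p_def)
  have "lap m \<beta> (\<lambda>x. sol \<beta> p l (length x)) x = - l * sol \<beta> p l (Suc j) * p ^ Suc j / p ^ Suc j"
  proof -
    have "lap m \<beta> (\<lambda>x. sol \<beta> p l (length x)) x = (\<beta> * sol \<beta> p l j + (1 - \<beta>) * sol \<beta> p l (Suc (Suc j)) - sol \<beta> p l (Suc j)) / p ^ Suc j"
      using lap_radial[OF mpos, of \<beta> "\<lambda>k. sol \<beta> p l k" x] Cons lx by (simp add: p_def del: sol.simps)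
    then show ?thesis using num by simp
  qed
  also have "\<dots> = - l * sol \<beta> p l (Suc j)" using pp p_pos by (simp add: p_def)
  finally show ?thesis using lx by (simp add: p_def)
qed

end

lemma branch_len: "b \<in> branches m \<Longrightarrow> length (b n) = n \<and> b n \<in> tree m"
proof (induction n)
  case 0 then show ?case by (simp add: branches_def tree_def)
next
  case (Suc n)
  then obtain i where "i < m" "b (Suc n) = b n @ [i]" by (auto simp: branches_def)
  then show ?case using Suc by (auto simp: tree_def)
qed

theorem theorem1p2:
  fixes m :: nat and \<beta> :: real
  assumes "m \<ge> 2" and "0 < \<beta>" and "\<beta> < 1 / 2"
  shows "principal_eigenvalue m \<beta> (lambda1 m \<beta>) \<and>
    (\<exists>u. eigenfunction m \<beta> (lambda1 m \<beta>) u \<and> u [] = 1 \<and>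
       (\<forall>x\<in>tree m. u x > 0) \<and>
       (\<forall>x\<in>tree m. lap m \<beta> u x + lambda1 m \<beta> * u x = 0) \<and>
       (\<forall>b\<in>branches m. (\<lambda>n. u (b n)) \<longlonglongrightarrow> 0) \<and>
       (\<exists>f :: nat \<Rightarrow> real. antimono f \<and> (\<forall>x\<in>tree m. u x = f (length x))))"
proof -
  note as = assms
  define A where "A = A_set m \<beta>"
  define L1 where "L1 = lambda1 m \<beta>"
  have L1A: "L1 = Sup A" by (simp add: L1_def A_def lambda1_def)
  define p where "p = p_beta \<beta>"
  have ne: "A \<noteq> {}" using A_nonempty[OF as] by (auto simp: A_def)
  have bdd: "bdd_above A" unfolding bdd_above_def using A_lt1[OF as] by (auto simp: A_def intro!: exI[of _ 1] less_imp_le)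
  have upper: "l \<in> A \<Longrightarrow> l \<le> L1" for l using bdd by (simp add: L1A cSup_upper)
  obtain a where a: "a \<in> A" using ne by blast
  have apos: "a > 0" using a by (simp add: A_def A_set_def)
  have L1pos: "L1 > 0" using upper[OF a] apos by simp
  have notin: "L1 \<notin> A"
  proof
    assume "L1 \<in> A"
    then obtain l' where "l' > L1" "l' \<in> A" using A_open[OF as] by (auto simp: A_def)
    then show False using upper by fastforce
  qed
  have below: "0 < l \<Longrightarrow> l < L1 \<Longrightarrow> l \<in> A" for l
  proof -
    assume l: "0 < l" "l < L1"
    then obtain x where "x \<in> A" "l < x" using less_cSup_iff[OF ne bdd] by (auto simp: L1A)
    then show "l \<in> A" using A_down[OF as] l by (auto simp: A_def)
  qed
  have solpos: "l \<in> A \<Longrightarrow> sol \<beta> p l n > 0" for l n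
  proof -
    assume "l \<in> A"
    then have "l \<in> A_set m \<beta>" by (simp add: A_def)
    from avg[OF as this, folded p_def] obtain V where V: "\<forall>k. V k > 0" "V 1 \<le> (1 - l) * V 0"
      "\<forall>k. \<beta> * V k + (1 - \<beta>) * V (Suc (Suc k)) \<le> (1 - l * p ^ Suc k) * V (Suc k)"
      by blast
    show ?thesis using compare[OF as V] by blast
  qed
  define f where "f = sol \<beta> p L1"
  have fnn: "f n \<ge> 0" for n
  proof -
    have "isCont (\<lambda>l. sol \<beta> p l n) L1" using sol_cont_aux[where b=\<beta> and p=p and n=n and z=L1] as by auto
    then have "((\<lambda>l. sol \<beta> p l n) \<longlongrightarrow> sol \<beta> p L1 n) (at L1)" by (simp add: isCont_def)
    then have t: "((\<lambda>l. sol \<beta> p l n) \<longlongrightarrow> sol \<beta> p L1 n) (at_left L1)"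
      by (rule tendsto_mono[rotated]) (rule at_le, simp)
    have "eventually (\<lambda>l. l \<in> {0<..<L1}) (at_left L1)" using eventually_at_left_real L1pos by blast
    then have "eventually (\<lambda>l. 0 \<le> sol \<beta> p l n) (at_left L1)"
      by (rule eventually_mono) (use below solpos in \<open>auto intro: less_imp_le\<close>)
    from tendsto_lowerbound[OF t this] show ?thesis by (simp add: f_def)
  qed
  have fdec: "f (Suc n) < f n" for n
  proof -
    have "(\<Sum>k<n. f (Suc k)) \<ge> 0" using fnn by (intro sum_nonneg) auto
    then have "(1 - \<beta>) + (\<Sum>k<n. f (Suc k)) > 0" using as by linarith
    then have "- L1 * p ^ n * ((1 - \<beta>) + (\<Sum>k<n. f (Suc k))) < 0"
      using L1pos p_pos[OF as] by (simp add: p_def mult_pos_pos)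
    then have "(1 - \<beta>) * (f (Suc n) - f n) < 0" using sol_diff[OF as, of L1 n] by (simp add: f_def p_def)
    then show ?thesis using as by (simp add: mult_less_0_iff)
  qed
  have fpos: "f n > 0" for n using fdec[of n] fnn[of "Suc n"] by simp
  have dec: "decseq f" unfolding decseq_Suc_iff using fdec less_imp_le by blast
  obtain L where L: "f \<longlonglongrightarrow> L" "\<forall>i. L \<le> f i" using decseq_convergent[OF dec, of 0] fnn by auto
  have f0: "f 0 = 1" by (simp add: f_def)
  have fle1: "f n \<le> 1" for n using dec f0 by (metis antimonoD le0)
  have eqn: "lap m \<beta> (\<lambda>x. f (length x)) x + L1 * f (length x) = 0" for x
    using radial_eq[OF as, of L1 x] by (simp add: f_def p_def)
  have L0: "L = 0"
  proof (rule ccontr)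
    assume "L \<noteq> 0"
    moreover have "L \<ge> 0" using L(1) fnn by (intro LIMSEQ_le_const) auto
    ultimately have Lp: "L > 0" by simp
    have "L1 \<in> A_set m \<beta>"
    proof (intro A_setI[OF as, of _ "L/2" 2 "\<lambda>x. f (length x)"])
      have L1: "L \<le> 1" using L(2) fle1[of 0] by (metis order.trans)
      show "0 < L1" "0 < L / 2" "L / 2 < 2" using L1pos Lp L1 by auto
      show "\<forall>x\<in>tree m. L / 2 < f (length x) \<and> f (length x) < 2"
      proof
        fix x :: "nat list"
        have "L \<le> f (length x)" "f (length x) \<le> 1" using L(2) fle1 by auto
        then show "L / 2 < f (length x) \<and> f (length x) < 2" using Lp by linarith
      qed
      show "\<forall>x\<in>tree m. lap m \<beta> (\<lambda>x. f (length x)) x + L1 * f (length x) \<le> 0" using eqn by simp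
    qed
    then show False using notin by (simp add: A_def)
  qed
  define u where "u = (\<lambda>x::nat list. f (length x))"
  have ef: "eigenfunction m \<beta> L1 u"
    unfolding eigenfunction_def
  proof (intro conjI)
    show "\<exists>B. \<forall>x\<in>tree m. \<bar>u x\<bar> \<le> B" using fle1 fnn by (intro exI[of _ 1]) (auto simp: u_def)
    show "\<exists>x\<in>tree m. u x \<noteq> 0" using f0 by (intro bexI[of _ "[]"]) (auto simp: u_def tree_def)
    show "\<forall>x\<in>tree m. - lap m \<beta> u x = L1 * u x" using eqn by (auto simp: u_def algebra_simps add_eq_0_iff)
    show "\<forall>b\<in>branches m. (\<lambda>n. u (b n)) \<longlonglongrightarrow> 0" using L L0 branch_len by (simp add: u_def)
  qed
  have "principal_eigenvalue m \<beta> L1"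
    unfolding principal_eigenvalue_def using L1pos ef fnn by (auto simp: u_def)
  moreover have "\<exists>u. eigenfunction m \<beta> L1 u \<and> u [] = 1 \<and>
       (\<forall>x\<in>tree m. u x > 0) \<and>
       (\<forall>x\<in>tree m. lap m \<beta> u x + L1 * u x = 0) \<and>
       (\<forall>b\<in>branches m. (\<lambda>n. u (b n)) \<longlonglongrightarrow> 0) \<and>
       (\<exists>f :: nat \<Rightarrow> real. antimono f \<and> (\<forall>x\<in>tree m. u x = f (length x)))"
    using ef f0 fpos eqn dec L L0 branch_len unfolding eigenfunction_def
    by (intro exI[of _ u]) (auto simp: u_def)
  ultimately show ?thesis by (simp add: L1_def)
qed

end
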